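(* Let $\mathcal A=[m]$, $1\le k\le m$, $\mathcal E=2^{\mathcal A}$. Then $$\sqrt{\tfrac{2}{\pi}}\cdot\frac{2^{2^m}}{2^m\cdot m!}\le\mathrm{Ndim}(\mathcal F_{\mathrm{sGST}})\le2^{2^m}\log(k+2).$$
   Context: $\mathcal A_k$ is the set of $k$-subsets of $\mathcal A$. Profiles are $P\in\mathcal E^n$, $n\ge1$; $\mathrm{Hist}(P)\in\mathbb Z_{\ge0}^{\mathcal E}$ counts occurrences. For $G\subseteq\mathcal E$, $\vec w_G$ is its indicator vector; $\vec1$ the all-ones vector. For $\tau:\mathcal A_k\times2^{\mathcal E}\to\{0,\dots,k+1\}$, $\mathrm{GST}_\tau$ maps $P$ to the set of $W\in\mathcal A_k$ with $\left(\vec w_G-\frac{\tau(W,G)}{k}\vec1\right)\cdot\mathrm{Hist}(P)<0$ for all $G\subseteq\mathcal E$. $\mathrm{GST}_\tau$ is symmetric if for every permutation $\sigma$ of $\mathcal A$, every $W\in\mathcal A_k$ and $G\subseteq\mathcal E$, $\tau(W,G)=\tau(\sigma(W),\sigma(G))$, where $\sigma(G)=\{\sigma(A):A\in G\}$. $\mathcal F_{\mathrm{sGST}}$ is the set of all symmetric GST axioms. Natarajan dimension: a finite set of profiles $\mathcal P$ is shattered by $\mathcal F$ if there are $f^0,f^1$ with $f^0(P)\ne f^1(P)$ on $\mathcal P$ such that for every $B\subseteq\mathcal P$ some $f\in\mathcal F$ equals $f^0$ on $B$ and $f^1$ on $\mathcal P\setminus B$; $\mathrm{Ndim}$ is the largest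 size of a shattered set. Logarithms are base 2. *)

theory Defs
  imports Complex_Main "HOL-Library.Extended_Nat"
begin

definition alts :: "nat \<Rightarrow> nat set" where
  "alts m = {1..m}"

definition ballots :: "nat \<Rightarrow> nat set set" where
  "ballots m = Pow (alts m)"

definition committees :: "nat \<Rightarrow> nat \<Rightarrow> nat set set" where
  "committees m k = {W. W \<subseteq> alts m \<and> card W = k}"

definition profiles :: "nat \<Rightarrow> nat set list set" where
  "profiles m = {P. P \<noteq> [] \<and> set P \<subseteq> ballots m}"

definition hist :: "nat set list \<Rightarrow> nat set \<Rightarrow> nat" where
  "hist P e = count_list P e"

definition gst :: "nat \<Rightarrow> nat \<Rightarrow> (nat set \<Rightarrow> nat set set \<Rightarrow> nat) \<Rightarrow> nat set list \<Rightarrow> nat set set" where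
  "gst m k \<tau> P = {W \<in> committees m k. \<forall>G. G \<subseteq> ballots m \<longrightarrow>
      (\<Sum>e\<in>ballots m. ((if e \<in> G then 1 else 0) - real (\<tau> W G) / real k) * real (hist P e)) < 0}"

definition symmetric_tau :: "nat \<Rightarrow> nat \<Rightarrow> (nat set \<Rightarrow> nat set set \<Rightarrow> nat) \<Rightarrow> bool" where
  "symmetric_tau m k \<tau> \<longleftrightarrow> (\<forall>\<sigma>. bij_betw \<sigma> (alts m) (alts m) \<longrightarrow>
      (\<forall>W\<in>committees m k. \<forall>G. G \<subseteq> ballots m \<longrightarrow>
         \<tau> W G = \<tau> (\<sigma> ` W) ((\<lambda>A. \<sigma> ` A) ` G)))"

definition valid_tau :: "nat \<Rightarrow> nat \<Rightarrow> (nat set \<Rightarrow> nat set set \<Rightarrow> nat) \<Rightarrow> bool" where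
  "valid_tau m k \<tau> \<longleftrightarrow> (\<forall>W\<in>committees m k. \<forall>G. G \<subseteq> ballots m \<longrightarrow> \<tau> W G \<le> k + 1)"

definition F_sGST :: "nat \<Rightarrow> nat \<Rightarrow> (nat set list \<Rightarrow> nat set set) set" where
  "F_sGST m k = {gst m k \<tau> | \<tau>. valid_tau m k \<tau> \<and> symmetric_tau m k \<tau>}"

definition shattered :: "('p \<Rightarrow> 'o) set \<Rightarrow> 'p set \<Rightarrow> bool" where
  "shattered F S \<longleftrightarrow> (\<exists>f0 f1. (\<forall>P\<in>S. f0 P \<noteq> f1 P) \<and>
      (\<forall>B\<subseteq>S. \<exists>f\<in>F. (\<forall>P\<in>B. f P = f0 P) \<and> (\<forall>P\<in>S - B. f P = f1 P)))"

definition Ndim :: "'p set \<Rightarrow> ('p \<Rightarrow> 'o) set \<Rightarrow> enat" where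
  "Ndim D F = Sup {enat (card S) | S. S \<subseteq> D \<and> finite S \<and> shattered F S}"

end

theory Submission
  imports Defs "HOL-Combinatorics.Permutations" "HOL-Library.FuncSet"
begin


definition orb :: "nat \<Rightarrow> nat set set \<Rightarrow> nat set set set" where
  "orb m H = {(\<lambda>A. p ` A) ` H | p. p permutes alts m}"

lemma orb_self: "H \<in> orb m H"
  unfolding orb_def by (rule CollectI, rule exI[of _ id]) (auto simp: permutes_id)

lemma img_comp: "(\<lambda>A. q ` A) ` ((\<lambda>A. p ` A) ` H) = (\<lambda>A. (q \<circ> p) ` A) ` H"
  by (simp add: image_image image_comp)

lemma orb_perm:
  assumes p: "p permutes alts m"
  shows "orb m ((\<lambda>A. p ` A) ` H) = orb m H"
proof
  show "orb m ((\<lambda>A. p ` A) ` H) \<subseteq> orb m H"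
  proof
    fix G assume "G \<in> orb m ((\<lambda>A. p ` A) ` H)"
    then obtain q where q: "q permutes alts m" "G = (\<lambda>A. q ` A) ` ((\<lambda>A. p ` A) ` H)" by (auto simp: orb_def)
    hence "G = (\<lambda>A. (q \<circ> p) ` A) ` H" by (simp add: img_comp)
    moreover have "(q \<circ> p) permutes alts m" using p q by (simp add: permutes_compose)
    ultimately show "G \<in> orb m H" unfolding orb_def by blast
  qed
next
  show "orb m H \<subseteq> orb m ((\<lambda>A. p ` A) ` H)"
  proof
    fix G assume "G \<in> orb m H"
    then obtain q where q: "q permutes alts m" "G = (\<lambda>A. q ` A) ` H" by (auto simp: orb_def)
    have "(q \<circ> inv p) \<circ> p = q" using p
      by (simp add: comp_assoc permutes_inv_o(2)[OF p])
    hence "G = (\<lambda>A. (q \<circ> inv p) ` A) ` ((\<lambda>A. p ` A) ` H)" using q by (simp only: img_comp)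
    moreover have "(q \<circ> inv p) permutes alts m" using p q by (simp add: permutes_compose permutes_inv)
    ultimately show "G \<in> orb m ((\<lambda>A. p ` A) ` H)" unfolding orb_def by blast
  qed
qed

lemma orb_eq: assumes "G \<in> orb m H" shows "orb m G = orb m H"
proof -
  obtain p where "p permutes alts m" "G = (\<lambda>A. p ` A) ` H" using assms by (auto simp: orb_def)
  thus ?thesis using orb_perm by blast
qed

lemma orb_finite_card: "finite (orb m H) \<and> card (orb m H) \<le> fact m"
proof -
  have e: "orb m H = (\<lambda>p. (\<lambda>A. p ` A) ` H) ` {p. p permutes alts m}" by (auto simp: orb_def)
  have f: "finite {p. p permutes alts m}" by (simp add: alts_def finite_permutations)
  have c: "card {p. p permutes alts m} = fact m" by (rule card_permutations) (auto simp: alts_def)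
  show ?thesis unfolding e using f c card_image_le[OF f] by auto
qed

lemma card_in_orb:
  assumes "G \<in> orb m H" shows "card G = card H"
proof -
  obtain p where p: "p permutes alts m" "G = (\<lambda>A. p ` A) ` H" using assms by (auto simp: orb_def)
  have "inj p" using p(1) by (rule permutes_inj)
  hence "inj_on (\<lambda>A. p ` A) H" by (auto simp: inj_on_def inj_image_eq_iff)
  thus ?thesis using p(2) card_image by blast
qed

lemma bij_to_perm:
  assumes "bij_betw \<sigma> (alts m) (alts m)" "G \<subseteq> ballots m"
  shows "\<exists>p. p permutes alts m \<and> (\<lambda>A. \<sigma> ` A) ` G = (\<lambda>A. p ` A) ` G"
proof -
  define p where "p = (\<lambda>x. if x \<in> alts m then \<sigma> x else x)"
  have "bij_betw p (alts m) (alts m)" using assms(1) by (rule bij_betw_cong[THEN iffD1, rotated]) (simp add: p_def)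
  hence "p permutes alts m" by (rule bij_imp_permutes) (simp add: p_def)
  moreover have "(\<lambda>A. \<sigma> ` A) ` G = (\<lambda>A. p ` A) ` G"
  proof (rule image_cong[OF refl])
    fix A assume "A \<in> G" hence "A \<subseteq> alts m" using assms(2) by (auto simp: ballots_def)
    thus "\<sigma> ` A = p ` A" by (auto simp: p_def)
  qed
  ultimately show ?thesis by blast
qed

lemma orb_bij:
  assumes "bij_betw \<sigma> (alts m) (alts m)" "G \<subseteq> ballots m"
  shows "orb m ((\<lambda>A. \<sigma> ` A) ` G) = orb m G"
  using bij_to_perm[OF assms] orb_perm by metis

lemma hist_distinct:
  assumes "distinct xs" shows "hist xs e = (if e \<in> set xs then 1 else 0)"
  using assms unfolding hist_def by (induction xs) auto

lemma sum_hist: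
  assumes "distinct xs" "set xs = G" "G \<subseteq> ballots m"
  shows "(\<Sum>e\<in>ballots m. ((if e \<in> G' then 1 else 0) - c) * real (hist xs e))
       = real (card (G' \<inter> G)) - c * real (card G)"
proof -
  have fin: "finite (ballots m)" by (simp add: ballots_def alts_def)
  have "(\<Sum>e\<in>ballots m. ((if e \<in> G' then 1 else 0) - c) * real (hist xs e))
      = (\<Sum>e\<in>ballots m. if e \<in> G then ((if e \<in> G' then 1 else 0) - c) else 0)"
    using assms by (intro sum.cong) (auto simp: hist_distinct)
  also have "\<dots> = (\<Sum>e\<in>G. ((if e \<in> G' then 1 else 0) - c))"
    using assms fin by (simp add: sum.If_cases Int_absorb1)
  also have "\<dots> = (\<Sum>e\<in>G. (if e \<in> G' then 1 else 0)) - c * real (card G)"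
    by (simp add: sum_subtractf)
  also have "(\<Sum>e\<in>G. (if e \<in> G' then 1 else 0)) = real (card (G' \<inter> G))"
  proof -
    have fG: "finite G" using assms fin finite_subset by blast
    have "(\<Sum>e\<in>G. (if e \<in> G' then 1 else 0::real)) = (\<Sum>e\<in>G \<inter> G'. 1)"
      using fG by (simp add: sum.If_cases Int_def)
    thus ?thesis by (simp add: Int_commute)
  qed
  finally show ?thesis .
qed



lemma exists_bij:
  assumes "finite A" "W0 \<subseteq> A" "W \<subseteq> A" "card W0 = card W"
  shows "\<exists>\<sigma>. bij_betw \<sigma> A A \<and> \<sigma> ` W0 = W"
proof -
  have "card (A - W0) = card (A - W)" using assms by (simp add: card_Diff_subset finite_subset)
  then obtain g where g: "bij_betw g (A - W0) (A - W)"
    using assms finite_same_card_bij by (meson finite_Diff)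
  obtain f where f: "bij_betw f W0 W" using assms finite_same_card_bij finite_subset by meson
  define \<sigma> where "\<sigma> = (\<lambda>x. if x \<in> W0 then f x else g x)"
  have 1: "bij_betw \<sigma> W0 W" using f by (rule bij_betw_cong[THEN iffD1, rotated]) (simp add: \<sigma>_def)
  have 2: "bij_betw \<sigma> (A - W0) (A - W)" using g by (rule bij_betw_cong[THEN iffD1, rotated]) (simp add: \<sigma>_def)
  have "bij_betw \<sigma> (W0 \<union> (A - W0)) (W \<union> (A - W))" by (rule bij_betw_combine[OF 1 2]) auto
  moreover have "W0 \<union> (A - W0) = A" "W \<union> (A - W) = A" using assms by auto
  ultimately show ?thesis using 1 by (metis bij_betw_imp_surj_on)
qed

definition W0 :: "nat \<Rightarrow> nat set" where "W0 k = {1..k}"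

lemma W0_comm: "k \<le> m \<Longrightarrow> W0 k \<in> committees m k"
  by (auto simp: W0_def committees_def alts_def)

lemma sym_reduce:
  assumes sym: "symmetric_tau m k \<tau>" and km: "k \<le> m"
    and s: "bij_betw \<sigma> (alts m) (alts m)" "\<sigma> ` W0 k = W" and G: "G \<subseteq> ballots m"
  shows "(\<lambda>A. inv_into (alts m) \<sigma> ` A) ` G \<subseteq> ballots m \<and>
         \<tau> W G = \<tau> (W0 k) ((\<lambda>A. inv_into (alts m) \<sigma> ` A) ` G)"
proof -
  define \<sigma>' where "\<sigma>' = inv_into (alts m) \<sigma>"
  have s': "bij_betw \<sigma>' (alts m) (alts m)" using s(1) by (simp add: \<sigma>'_def bij_betw_inv_into)
  define G'' where "G'' = (\<lambda>A. \<sigma>' ` A) ` G"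
  have G'': "G'' \<subseteq> ballots m" using G s' by (auto simp: G''_def ballots_def bij_betw_def)
  have "(\<lambda>A. \<sigma> ` A) ` G'' = G"
  proof -
    have "\<And>A. A \<in> G \<Longrightarrow> \<sigma> ` (\<sigma>' ` A) = A"
      using G s(1) unfolding \<sigma>'_def by (intro image_inv_into_cancel) (auto simp: ballots_def bij_betw_def)
    thus ?thesis by (simp add: G''_def image_image)
  qed
  hence "\<tau> W G = \<tau> (\<sigma> ` W0 k) ((\<lambda>A. \<sigma> ` A) ` G'')" using s by simp
  also have "\<dots> = \<tau> (W0 k) G''"
    using sym s(1) W0_comm[OF km] G'' unfolding symmetric_tau_def by metis
  finally show ?thesis using G'' unfolding G''_def \<sigma>'_def by blast
qed

definition Tset :: "nat \<Rightarrow> nat \<Rightarrow> (nat set \<Rightarrow> nat set set \<Rightarrow> nat) set" where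
  "Tset m k = {\<tau>. valid_tau m k \<tau> \<and> symmetric_tau m k \<tau>}"

definition rr :: "nat \<Rightarrow> nat \<Rightarrow> (nat set \<Rightarrow> nat set set \<Rightarrow> nat) \<Rightarrow> nat set set \<Rightarrow> nat" where
  "rr m k \<tau> = restrict (\<tau> (W0 k)) (Pow (ballots m))"

lemma factor:
  assumes "\<tau>1 \<in> Tset m k" "\<tau>2 \<in> Tset m k" "rr m k \<tau>1 = rr m k \<tau>2" "k \<le> m"
  shows "gst m k \<tau>1 = gst m k \<tau>2"
proof -
  have agree: "\<tau>1 W G = \<tau>2 W G" if W: "W \<in> committees m k" and G: "G \<subseteq> ballots m" for W G
  proof -
    have fa: "finite (alts m)" by (simp add: alts_def)
    obtain \<sigma> where s: "bij_betw \<sigma> (alts m) (alts m)" "\<sigma> ` W0 k = W"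
      using exists_bij[OF fa, of "W0 k" W] W W0_comm[OF assms(4)] by (auto simp: committees_def)
    have 1: "\<tau>1 W G = \<tau>1 (W0 k) ((\<lambda>A. inv_into (alts m) \<sigma> ` A) ` G)"
      and G'': "(\<lambda>A. inv_into (alts m) \<sigma> ` A) ` G \<subseteq> ballots m"
      using sym_reduce[OF _ assms(4) s G] assms(1) by (auto simp: Tset_def)
    have 2: "\<tau>2 W G = \<tau>2 (W0 k) ((\<lambda>A. inv_into (alts m) \<sigma> ` A) ` G)"
      using sym_reduce[OF _ assms(4) s G] assms(2) by (auto simp: Tset_def)
    have "restrict (\<tau>1 (W0 k)) (Pow (ballots m)) ((\<lambda>A. inv_into (alts m) \<sigma> ` A) ` G) =
          restrict (\<tau>2 (W0 k)) (Pow (ballots m)) ((\<lambda>A. inv_into (alts m) \<sigma> ` A) ` G)"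
      using assms(3) unfolding rr_def by simp
    thus ?thesis using 1 2 G'' by simp
  qed
  show ?thesis
  proof
    fix P
    show "gst m k \<tau>1 P = gst m k \<tau>2 P"
      unfolding gst_def
    proof (intro Collect_cong conj_cong refl)
      fix W assume "W \<in> committees m k"
      thus "(\<forall>G. G \<subseteq> ballots m \<longrightarrow>
           (\<Sum>e\<in>ballots m. ((if e \<in> G then 1 else 0) - real (\<tau>1 W G) / real k) * real (hist P e)) < 0) =
          (\<forall>G. G \<subseteq> ballots m \<longrightarrow>
           (\<Sum>e\<in>ballots m. ((if e \<in> G then 1 else 0) - real (\<tau>2 W G) / real k) * real (hist P e)) < 0)"
        using agree by simp
    qed
  qed
qed



lemma F_eq: "F_sGST m k = gst m k ` Tset m k"
  by (auto simp: F_sGST_def Tset_def)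

lemma card_ballots: "card (ballots m) = 2 ^ m" "finite (ballots m)"
  by (auto simp: ballots_def alts_def card_Pow)

lemma card_F:
  assumes "k \<le> m"
  shows "finite (F_sGST m k) \<and> card (F_sGST m k) \<le> (k + 2) ^ (2 ^ (2 ^ m))"
proof -
  define PI where "PI = (\<Pi>\<^sub>E G \<in> Pow (ballots m). {0..k+1})"
  have fPI: "finite PI" unfolding PI_def by (intro finite_PiE) (auto simp: card_ballots)
  have cPI: "card PI = (k + 2) ^ (2 ^ (2 ^ m))"
    unfolding PI_def by (subst card_PiE) (auto simp: card_ballots card_Pow)
  have sub: "rr m k ` Tset m k \<subseteq> PI"
  proof
    fix h assume "h \<in> rr m k ` Tset m k"
    then obtain \<tau> where "\<tau> \<in> Tset m k" "h = rr m k \<tau>" by auto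
    thus "h \<in> PI" using W0_comm[OF assms]
      by (auto simp: PI_def rr_def Tset_def valid_tau_def restrict_PiE_iff)
  qed
  define \<phi> where "\<phi> h = gst m k (SOME \<tau>. \<tau> \<in> Tset m k \<and> rr m k \<tau> = h)" for h
  have "gst m k ` Tset m k \<subseteq> \<phi> ` (rr m k ` Tset m k)"
  proof
    fix f assume "f \<in> gst m k ` Tset m k"
    then obtain \<tau> where t: "\<tau> \<in> Tset m k" "f = gst m k \<tau>" by auto
    have ex: "\<exists>\<tau>'. \<tau>' \<in> Tset m k \<and> rr m k \<tau>' = rr m k \<tau>" using t by blast
    have "\<phi> (rr m k \<tau>) = f"
    proof -
      define \<tau>' where "\<tau>' = (SOME \<tau>'. \<tau>' \<in> Tset m k \<and> rr m k \<tau>' = rr m k \<tau>)"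
      have "\<tau>' \<in> Tset m k \<and> rr m k \<tau>' = rr m k \<tau>" unfolding \<tau>'_def by (rule someI_ex[OF ex])
      hence "gst m k \<tau>' = gst m k \<tau>" using factor[of \<tau>' m k \<tau>] t(1) assms by blast
      thus ?thesis unfolding \<phi>_def t(2) \<tau>'_def by simp
    qed
    thus "f \<in> \<phi> ` (rr m k ` Tset m k)" using t by blast
  qed
  moreover have "finite (rr m k ` Tset m k)" using sub fPI finite_subset by blast
  moreover have "card (\<phi> ` (rr m k ` Tset m k)) \<le> card PI"
  proof -
    have f: "finite (rr m k ` Tset m k)" using sub fPI finite_subset by blast
    show ?thesis using card_image_le[OF f, of \<phi>] card_mono[OF fPI sub] by linarith
  qed
  ultimately show ?thesis unfolding F_eq cPI[symmetric]
  proof -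
    assume a: "gst m k ` Tset m k \<subseteq> \<phi> ` rr m k ` Tset m k" "finite (rr m k ` Tset m k)"
      "card (\<phi> ` rr m k ` Tset m k) \<le> card PI"
    have f: "finite (\<phi> ` rr m k ` Tset m k)" using a(2) by blast
    have "finite (gst m k ` Tset m k)" using finite_subset[OF a(1) f] .
    moreover have "card (gst m k ` Tset m k) \<le> card (\<phi> ` rr m k ` Tset m k)"
      by (rule card_mono[OF f a(1)])
    ultimately show "finite (gst m k ` Tset m k) \<and> card (gst m k ` Tset m k) \<le> card PI"
      using a(3) by linarith
  qed
qed

lemma shattered_card:
  assumes "shattered F S" "finite F" "finite S"
  shows "2 ^ card S \<le> card F"
proof -
  obtain f0 f1 where d: "\<forall>P\<in>S. f0 P \<noteq> f1 P"
    and h: "\<forall>B\<subseteq>S. \<exists>f\<in>F. (\<forall>P\<in>B. f P = f0 P) \<and> (\<forall>P\<in>S - B. f P = f1 P)"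
    using assms(1) unfolding shattered_def by blast
  obtain g where g: "\<And>B. B \<subseteq> S \<Longrightarrow> g B \<in> F \<and> (\<forall>P\<in>B. g B P = f0 P) \<and> (\<forall>P\<in>S - B. g B P = f1 P)"
  proof -
    have "\<forall>B. \<exists>f. B \<subseteq> S \<longrightarrow> f \<in> F \<and> (\<forall>P\<in>B. f P = f0 P) \<and> (\<forall>P\<in>S - B. f P = f1 P)"
      using h by blast
    hence "\<exists>g. \<forall>B. B \<subseteq> S \<longrightarrow> g B \<in> F \<and> (\<forall>P\<in>B. g B P = f0 P) \<and> (\<forall>P\<in>S - B. g B P = f1 P)"
      by (rule choice)
    thus ?thesis using that by blast
  qed
  have "inj_on g (Pow S)"
  proof (rule inj_onI)
    fix B1 B2 assume b: "B1 \<in> Pow S" "B2 \<in> Pow S" "g B1 = g B2"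
    show "B1 = B2"
    proof (rule ccontr)
      assume "B1 \<noteq> B2"
      then obtain P where "P \<in> B1 \<and> P \<notin> B2 \<or> P \<in> B2 \<and> P \<notin> B1" by blast
      thus False
      proof
        assume P: "P \<in> B1 \<and> P \<notin> B2"
        hence "P \<in> S" using b by auto
        hence "g B1 P = f0 P" "g B2 P = f1 P" using P g[of B1] g[of B2] b by auto
        thus False using b(3) d \<open>P \<in> S\<close> by auto
      next
        assume P: "P \<in> B2 \<and> P \<notin> B1"
        hence "P \<in> S" using b by auto
        hence "g B2 P = f0 P" "g B1 P = f1 P" using P g[of B1] g[of B2] b by auto
        thus False using b(3) d \<open>P \<in> S\<close> by auto
      qed
    qed
  qed
  hence "card (g ` Pow S) = 2 ^ card S" using assms(3) by (simp add: card_image card_Pow)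
  moreover have "g ` Pow S \<subseteq> F" using g by auto
  ultimately show ?thesis using card_mono[OF assms(2), of "g ` Pow S"] by simp
qed



lemma lower_construction:
  assumes k1: "1 \<le> k" and km: "k \<le> m"
  shows "\<exists>S. S \<subseteq> profiles m \<and> finite S \<and> shattered (F_sGST m k) S \<and>
             card {G. G \<subseteq> ballots m \<and> card G = 2 ^ (m - 1)} \<le> card S * fact m"
proof -
  define s where "s = (2::nat) ^ (m - 1)"
  have s1: "s \<ge> 1" by (simp add: s_def)
  define X where "X = {G. G \<subseteq> ballots m \<and> card G = s}"
  define Orbs where "Orbs = orb m ` X"
  define rep where "rep Ob = (SOME H. H \<in> X \<and> orb m H = Ob)" for Ob
  define R where "R = rep ` Orbs"
  define prof where "prof G = (SOME xs. set xs = G \<and> distinct xs)" for G :: "nat set set"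
  define S where "S = prof ` R"
  have fb: "finite (ballots m)" by (rule card_ballots(2))
  have fX: "finite X" unfolding X_def using fb by (rule rev_finite_subset[OF finite_Pow_iff[THEN iffD2]]) auto
  have fOrbs: "finite Orbs" using fX by (simp add: Orbs_def)
  have rep_prop: "rep Ob \<in> X \<and> orb m (rep Ob) = Ob" if "Ob \<in> Orbs" for Ob
  proof -
    have "\<exists>H. H \<in> X \<and> orb m H = Ob" using that by (auto simp: Orbs_def)
    thus ?thesis unfolding rep_def by (rule someI_ex)
  qed
  have RX: "R \<subseteq> X" using rep_prop by (auto simp: R_def)
  have inj_orb: "G1 = G2" if "G1 \<in> R" "G2 \<in> R" "orb m G1 = orb m G2" for G1 G2
    using that rep_prop unfolding R_def by auto
  have prof_prop: "set (prof G) = G \<and> distinct (prof G)" if "G \<in> X" for G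
  proof -
    have "finite G" using that fb by (auto simp: X_def intro: finite_subset)
    hence "\<exists>xs. set xs = G \<and> distinct xs" by (rule finite_distinct_list)
    thus ?thesis unfolding prof_def by (rule someI_ex)
  qed
  have inj_rep: "inj_on rep Orbs" by (rule inj_onI) (metis rep_prop)
  have inj_prof: "inj_on prof R" by (rule inj_onI) (metis prof_prop RX subsetD)
  have cS: "card S = card Orbs" unfolding S_def R_def
    using inj_rep inj_prof by (simp add: card_image R_def)
  have fS: "finite S" using fOrbs by (simp add: S_def R_def)
  have cX: "card X \<le> card Orbs * fact m"
  proof -
    have "X \<subseteq> \<Union>Orbs" using orb_self by (auto simp: Orbs_def)
    hence "card X \<le> card (\<Union>Orbs)" using fOrbs orb_finite_card by (intro card_mono) (auto simp: Orbs_def)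
    also have "\<dots> \<le> sum card Orbs" by (rule card_Union_le_sum_card)
    also have "\<dots> \<le> card Orbs * fact m"
      using sum_bounded_above[of Orbs card "fact m"] orb_finite_card by (auto simp: Orbs_def)
    finally show ?thesis .
  qed
  have SP: "S \<subseteq> profiles m"
  proof
    fix P assume "P \<in> S"
    then obtain G where G: "G \<in> R" "P = prof G" by (auto simp: S_def)
    hence GX: "G \<in> X" using RX by auto
    hence "G \<noteq> {}" using s1 by (auto simp: X_def)
    thus "P \<in> profiles m" using prof_prop[OF GX] GX G by (auto simp: profiles_def X_def)
  qed
  have comm_ne: "committees m k \<noteq> {}" using W0_comm[OF km] by auto
  have "shattered (F_sGST m k) S"
    unfolding shattered_def
  proof (rule exI[of _ "\<lambda>P. committees m k"], rule exI[of _ "\<lambda>P. {}"], rule conjI)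
    show "\<forall>P\<in>S. committees m k \<noteq> {}" using comm_ne by blast
  next
    show "\<forall>B\<subseteq>S. \<exists>f\<in>F_sGST m k. (\<forall>P\<in>B. f P = committees m k) \<and> (\<forall>P\<in>S - B. f P = {})"
    proof (intro allI impI)
    fix B assume BS: "B \<subseteq> S"
    define Q where "Q = {orb m G | G. G \<in> R \<and> prof G \<notin> B}"
    define \<tau> where "\<tau> = (\<lambda>(W::nat set) G'. if orb m G' \<in> Q then k else k + 1)"
    have inF: "gst m k \<tau> \<in> F_sGST m k"
      unfolding F_sGST_def
    proof (intro CollectI exI conjI)
      show "valid_tau m k \<tau>" by (auto simp: valid_tau_def \<tau>_def)
      show "symmetric_tau m k \<tau>" unfolding symmetric_tau_def \<tau>_def
        using orb_bij by simp
    qed (rule refl)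
    have val: "(\<Sum>e\<in>ballots m. ((if e \<in> G' then 1 else 0) - real (\<tau> W G') / real k) * real (hist (prof G) e))
          = real (card (G' \<inter> G)) - real (\<tau> W G') / real k * real (card G)" if "G \<in> X" for G G' W
      using prof_prop[OF that] that by (intro sum_hist) (auto simp: X_def)
    have inB: "gst m k \<tau> P = committees m k" if PB: "P \<in> B" for P
    proof -
      obtain G where G: "G \<in> R" "P = prof G" using PB BS by (auto simp: S_def)
      have GX: "G \<in> X" using G RX by auto
      have fG: "finite G" "card G = s" using GX fb by (auto simp: X_def intro: finite_subset)
      have cGpos: "card G > 0" using fG s1 by simp
      have neg: "real (card (G' \<inter> G)) - real (\<tau> W G') / real k * real (card G) < 0"
        if G': "G' \<subseteq> ballots m" for G' W
      proof (cases "orb m G' \<in> Q")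
        case True
        then obtain G2 where G2: "G2 \<in> R" "prof G2 \<notin> B" "orb m G' = orb m G2" by (auto simp: Q_def)
        have "G' \<in> orb m G2" using orb_self[of G' m] G2(3) by simp
        hence cG': "card G' = s" using card_in_orb G2(1) RX by (auto simp: X_def)
        have fG': "finite G'" using G' fb finite_subset by blast
        have "\<not> G \<subseteq> G'"
        proof
          assume "G \<subseteq> G'"
          hence "G = G'" using card_subset_eq[OF fG' _ ] cG' fG by metis
          hence "G = G2" using inj_orb[OF G(1) G2(1)] G2(3) by simp
          thus False using G2(2) G(2) PB by simp
        qed
        hence "G' \<inter> G \<subset> G" by auto
        hence "card (G' \<inter> G) < card G" using fG by (intro psubset_card_mono) auto
        moreover have "\<tau> W G' = k" using True by (simp add: \<tau>_def)
        ultimately show ?thesis using k1 by simp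
      next
        case False
        have "card (G' \<inter> G) \<le> card G" using fG by (intro card_mono) auto
        hence c: "real (card (G' \<inter> G)) \<le> real (card G)" by simp
        have t: "\<tau> W G' = k + 1" using False by (simp add: \<tau>_def)
        have gt: "real (k + 1) / real k * real (card G) > real (card G)"
          using k1 cGpos by (simp add: field_simps)
        show ?thesis using c gt unfolding t by linarith
      qed
      show ?thesis unfolding gst_def G(2) using val[OF GX] neg by auto
    qed
    have notB: "gst m k \<tau> P = {}" if PSB: "P \<in> S - B" for P
    proof -
      obtain G where G: "G \<in> R" "P = prof G" using PSB by (auto simp: S_def)
      have GX: "G \<in> X" using G RX by auto
      have Gb: "G \<subseteq> ballots m" using GX by (auto simp: X_def)
      have "orb m G \<in> Q" using G PSB by (auto simp: Q_def)
      hence "\<tau> W G = k" for W by (simp add: \<tau>_def)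
      hence "\<not> (real (card (G \<inter> G)) - real (\<tau> W G) / real k * real (card G) < 0)" for W
        using k1 by simp
      thus ?thesis unfolding gst_def G(2) using val[OF GX] Gb by auto
    qed
    show "\<exists>f\<in>F_sGST m k. (\<forall>P\<in>B. f P = committees m k) \<and> (\<forall>P\<in>S - B. f P = {})"
      using inF inB notB by blast
  qed
  qed
  moreover have "card {G. G \<subseteq> ballots m \<and> card G = 2 ^ (m - 1)} \<le> card S * fact m"
    using cX cS by (simp add: X_def s_def)
  ultimately show ?thesis using SP fS by blast
qed



theorem theorem10:
  fixes m k :: nat
  assumes "1 \<le> k" and "k \<le> m"
  shows "\<exists>d::nat. Ndim (profiles m) (F_sGST m k) = enat d \<and>
     sqrt (2 / pi) * (2 ^ (2 ^ m) / (2 ^ m * fact m)) \<le> real d \<and>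
     real d \<le> 2 ^ (2 ^ m) * log 2 (real k + 2)"
proof -
  define C where "C = {enat (card S) | S. S \<subseteq> profiles m \<and> finite S \<and> shattered (F_sGST m k) S}"
  define M where "M = (k + 2) ^ (2 ^ (2 ^ m))"
  have bnd: "2 ^ card S \<le> M" if "finite S" "shattered (F_sGST m k) S" for S
    using shattered_card[OF that(2) _ that(1)] card_F[OF assms(2)] unfolding M_def by fastforce
  have bnd2: "card S \<le> M" if "finite S" "shattered (F_sGST m k) S" for S
    using bnd[OF that] less_exp[of "card S"] by linarith
  have CM: "C \<subseteq> enat ` {..M}" using bnd2 by (auto simp: C_def)
  have fC: "finite C" using CM finite_subset by blast
  obtain S1 where S1: "S1 \<subseteq> profiles m" "finite S1" "shattered (F_sGST m k) S1"
    "card {G. G \<subseteq> ballots m \<and> card G = 2 ^ (m - 1)} \<le> card S1 * fact m"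
    using lower_construction[OF assms] by blast
  have S1C: "enat (card S1) \<in> C" using S1 by (auto simp: C_def)
  have "Sup C \<in> C"
  proof (rule finite_Sup_in[OF fC])
    show "C \<noteq> {}" using S1C by blast
    fix x y assume "x \<in> C" "y \<in> C"
    thus "sup x y \<in> C" by (cases "x \<le> y") (auto simp: sup_absorb1 sup_absorb2)
  qed
  then obtain S0 where S0: "Sup C = enat (card S0)" "finite S0" "shattered (F_sGST m k) S0"
    by (auto simp: C_def)
  define d where "d = card S0"
  have Nd: "Ndim (profiles m) (F_sGST m k) = enat d" using S0 by (simp add: Ndim_def C_def d_def)
  have "enat (card S1) \<le> enat d" using S1C S0(1) Sup_upper[OF S1C] by (simp add: d_def)
  hence S1d: "card S1 \<le> d" by simp
  have m1: "m \<ge> 1" using assms by simp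
  define n where "n = (2::nat) ^ (m - 1)"
  have n2: "2 ^ m = 2 * n" unfolding n_def using m1 by (cases m) auto
  have npos: "n > 0" by (simp add: n_def)
  have cX: "card {G. G \<subseteq> ballots m \<and> card G = 2 ^ (m - 1)} = (2 * n) choose n"
    using n_subsets[OF card_ballots(2)] card_ballots(1) n2 by (simp add: n_def)
  have cb: "4 ^ n / (2 * real n) \<le> real ((2 * n) choose n)" by (rule central_binomial_lower_bound[OF npos])
  have h: "(2 * n) choose n \<le> card S1 * fact m" using S1(4) cX by simp
  have "real ((2 * n) choose n) \<le> real (card S1 * fact m)" using h by (rule of_nat_mono)
  also have "\<dots> = real (card S1) * fact m" by simp
  also have "\<dots> \<le> real d * fact m" using S1d by (simp add: mult_right_mono)
  finally have A: "4 ^ n / (2 * real n) \<le> real d * fact m" using cb by linarith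
  have e1: "(4::real) ^ n = 2 ^ (2 ^ m)" by (simp add: n2 power_mult)
  have e2: "2 * real n = 2 ^ m" using n2 by (metis of_nat_mult of_nat_numeral of_nat_power)
  have B: "2 ^ (2 ^ m) / (2 ^ m * fact m) \<le> real d"
    using A unfolding e1 e2 by (simp add: field_simps)
  have "2 / pi \<le> 1" using pi_ge_two by simp
  hence sq: "sqrt (2 / pi) \<le> 1" by simp
  have nn: "0 \<le> (2::real) ^ (2 ^ m) / (2 ^ m * fact m)" by simp
  have low: "sqrt (2 / pi) * (2 ^ (2 ^ m) / (2 ^ m * fact m)) \<le> real d"
    using mult_right_mono[OF sq nn] B by linarith
  have "2 ^ d \<le> M" using bnd[OF S0(2,3)] by (simp add: d_def)
  hence le: "(2::real) ^ d \<le> (real k + 2) ^ (2 ^ (2 ^ m))"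
    unfolding M_def by (metis of_nat_add of_nat_le_iff of_nat_numeral of_nat_power)
  have "real d = log 2 ((2::real) ^ d)" by simp
  also have "\<dots> \<le> log 2 ((real k + 2) ^ (2 ^ (2 ^ m)))"
    using le by (subst log_le_cancel_iff) auto
  also have "\<dots> = 2 ^ (2 ^ m) * log 2 (real k + 2)" by (subst log_nat_power) auto
  finally have up: "real d \<le> 2 ^ (2 ^ m) * log 2 (real k + 2)" .
  show ?thesis using Nd low up by blast
qed


end
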